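(* For every $R>0$ and every integer $\ell\ge1$, $\widehat W_R(\ell)\le\widehat W_R(1)$, where $\widehat W_R(\ell)=\frac{2}{\pi\ell^3}(\ell R-\sin(\ell R))$.
   Context: For $R\in[0,\pi]$, $\widehat W_R(\ell)$ is the $\ell$-th Fourier coefficient $\int_{\mathbb T}W_R(\theta)e^{-2\pi i\ell\theta}d\theta$ of the Hegselmann--Krause interaction $W_R(\theta)=(R-2\pi|\theta|)_+^2$ on $\mathbb T=[-\frac12,\frac12)$; the claim concerns the explicit formula given. *)

theory Defs
  imports Complex_Main
begin

text \<open>Explicit formula for the Fourier coefficient of the Hegselmann--Krause interaction.\<close>
definition W_hat :: "real \<Rightarrow> nat \<Rightarrow> real" where
  "W_hat R l = 2 / (pi * real l ^ 3) * (real l * R - sin (real l * R))"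

end

theory Submission
  imports Defs
begin

lemma abs_sin_mult_le: "\<bar>sin (real n * y)\<bar> \<le> real n * \<bar>sin y\<bar>"
proof (induction n)
  case 0 then show ?case by simp
next
  case (Suc n)
  have "sin (real (Suc n) * y) = sin (real n * y) * cos y + cos (real n * y) * sin y"
    by (simp add: distrib_right sin_add)
  also have "\<bar>\<dots>\<bar> \<le> \<bar>sin (real n * y)\<bar> * \<bar>cos y\<bar> + \<bar>cos (real n * y)\<bar> * \<bar>sin y\<bar>"
    by (metis abs_mult abs_triangle_ineq)
  also have "\<dots> \<le> \<bar>sin (real n * y)\<bar> + \<bar>sin y\<bar>"
    by (intro add_mono mult_left_le mult_left_le_one_le) (auto intro: mult_left_le_one_le)
  finally show ?case using Suc by (simp add: distrib_right)
qed

lemma one_minus_cos_le: "1 - cos (real n * x) \<le> (real n)^2 * (1 - cos x)"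
proof -
  have c1: "1 - cos (2 * z) = 2 * (sin z)^2" for z :: real
    by (simp add: cos_double_sin)
  have a: "\<bar>sin (real n * (x/2))\<bar> \<le> real n * \<bar>sin (x/2)\<bar>" by (rule abs_sin_mult_le)
  have "(sin (real n * (x/2)))^2 \<le> (real n * \<bar>sin (x/2)\<bar>)^2"
    using a by (metis abs_ge_zero power2_abs power_mono)
  then have "2 * (sin (real n * (x/2)))^2 \<le> (real n)^2 * (2 * (sin (x/2))^2)"
    by (simp add: power_mult_distrib)
  moreover have "1 - cos (real n * x) = 2 * (sin (real n * (x/2)))^2"
    using c1[of "real n * (x/2)"] by simp
  moreover have "1 - cos x = 2 * (sin (x/2))^2"
    using c1[of "x/2"] by simp
  ultimately show ?thesis by simp
qed

lemma key: "R \<ge> 0 \<Longrightarrow> real l * R - sin (real l * R) \<le> (real l)^3 * (R - sin R)"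
proof -
  assume R: "R \<ge> 0"
  define F where "F = (\<lambda>x. (real l)^3 * (x - sin x) - (real l * x - sin (real l * x)))"
  have d: "(F has_real_derivative ((real l)^3 * (1 - cos x) - (real l - cos (real l * x) * real l))) (at x)" for x
    unfolding F_def by (auto intro!: derivative_eq_intros)
  have nn: "0 \<le> (real l)^3 * (1 - cos x) - (real l - cos (real l * x) * real l)" for x
  proof -
    have "real l * (1 - cos (real l * x)) \<le> real l * ((real l)^2 * (1 - cos x))"
      by (intro mult_left_mono one_minus_cos_le) auto
    then show ?thesis by (simp add: algebra_simps power3_eq_cube power2_eq_square)
  qed
  have "F 0 \<le> F R"
    by (rule DERIV_nonneg_imp_nondecreasing[OF R]) (use d nn in blast)
  then show ?thesis by (simp add: F_def)
qed

theorem lemma3p3: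
  fixes R :: real and l :: nat
  assumes "R > 0" and "l \<ge> 1"
  shows "W_hat R l \<le> W_hat R 1"
proof -
  have lp: "(real l)^3 > 0" using assms by simp
  have k: "real l * R - sin (real l * R) \<le> (real l)^3 * (R - sin R)"
    using key assms by simp
  have "W_hat R l = 2 / pi * ((real l * R - sin (real l * R)) / (real l)^3)"
    by (simp add: W_hat_def)
  also have "\<dots> \<le> 2 / pi * (R - sin R)"
    using k lp by (intro mult_left_mono) (auto simp: divide_le_eq mult.commute)
  also have "\<dots> = W_hat R 1" by (simp add: W_hat_def)
  finally show ?thesis .
qed

end
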